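(* Let $N\ge3$ and suppose $\boldsymbol{\mathfrak h}\notin\mathrm{col}(C)$. Consider the optimization problem: maximize $\boldsymbol{\mathfrak b}\cdot\boldsymbol{\mathfrak h}$ over $\boldsymbol{\mathfrak b}\in\mathbb{R}^N$ subject to $\|\boldsymbol{\mathfrak b}\|_\infty\le1$ and $\boldsymbol{\mathfrak b}\perp\mathrm{col}(C)$. Then its optimal value equals $\min_{\mathbf v\in\mathrm{col}(C)}\|\boldsymbol{\mathfrak h}-\mathbf v\|_1 = 2\min_{S\in\mathfrak{S}}\|H-S\|$ (operator norm). Moreover, if $\boldsymbol{\mathfrak b}^\diamond$ is an optimal solution and $\boldsymbol\theta=\tfrac12\arccos\boldsymbol{\mathfrak b}^\diamond$ (entrywise), then the dephasing code associated with $\boldsymbol\theta$ satisfies $PSP\in\mathbb{R}P$ for all $S\in\mathfrak{S}$, $\langle0_L|H|1_L\rangle=0$, and $\langle0_L|H|0_L\rangle-\langle1_L|H|1_L\rangle=\boldsymbol{\mathfrak h}\cdot\boldsymbol{\mathfrak b}^\diamond=\min_{\mathbf v\in\mathrm{col}(C)}\|\boldsymbol{\mathfrak h}-\mathbf v\|_1>0$. Hence the state $\tfrac1{\sqrt2}(|0_L\rangle+|1_L\rangle)$ evolving under $\omega PHP$ for time $t$ has quantum Fisher information $t^2\min_{\mathbf v\in\mathrm{col}(C)}\|\boldsymbol{\mathfrak h}-\mathbf v\|_1^2=4t^2\min_{S\in\mathfrak S}\|H-S\|^2$.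
   Context: Qubits $1,\dots,N$; $Z_j$, $X_j$ denote the Pauli $Z$, $X$ operators on qubit $j$ of $(\mathbb{C}^2)^{\otimes N}$. For $\mathbf v\in\mathbb{R}^N$, $\mathbf v\cdot\mathbf Z:=\sum_j v_jZ_j$. Dephasing model: $\boldsymbol{\mathfrak h}\in\mathbb{R}^N$, $H=\tfrac12\boldsymbol{\mathfrak h}\cdot\mathbf Z$; $C$ is a real symmetric positive semidefinite $N\times N$ matrix with orthonormal eigenvectors $\mathbf v_1,\dots,\mathbf v_N$ and eigenvalues $\lambda_1,\dots,\lambda_N\ge0$; $L_j=\sqrt{\lambda_j}\,\mathbf v_j\cdot\mathbf Z$; $\mathrm{col}(C)$ is the column space of $C$; the Lindblad span $\mathfrak{S}$ is the real span of $I$, all $L_i$ and all $L_iL_j$. Dephasing code for $\boldsymbol\theta\in\mathbb{R}^N$: $|0_L\rangle=\bigotimes_{j=1}^N(\cos\theta_j|0\rangle+i\sin\theta_j|1\rangle)$, $|1_L\rangle=X^{\otimes N}|0_L\rangle$, $P=|0_L\rangle\langle0_L|+|1_L\rangle\langle1_L|$. $\|\cdot\|_1,\|\cdot\|_\infty$ are the $\ell^1$ and max norms on $\mathbb{R}^N$. For a pure state $|\psi\rangle$ under Hamiltonian $\omega K$ for time $t$, the quantum Fisher information is $4t^2(\langle\psi|K^2|\psi\rangle-\langle\psi|K|\psi\rangle^2)$. *)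

theory Defs
  imports "HOL-Analysis.Analysis"
begin

text \<open>Qubits are indexed by a finite type 'n (N = CARD('n)). A computational basis
state of (C^2)^{\<otimes>N} is a bit string s :: 'n \<Rightarrow> bool (s j = True means |1> on qubit j).\<close>

type_synonym 'n qstate = "complex ^ ('n \<Rightarrow> bool)"
type_synonym 'n qop = "complex ^ ('n \<Rightarrow> bool) ^ ('n \<Rightarrow> bool)"

text \<open>Single-qubit matrices (entries indexed by bool, False = |0>, True = |1>).\<close>
definition pauliZ1 :: "bool \<Rightarrow> bool \<Rightarrow> complex" where
  "pauliZ1 a b = (if a = b then (if a then -1 else 1) else 0)"
definition pauliX1 :: "bool \<Rightarrow> bool \<Rightarrow> complex" where
  "pauliX1 a b = (if a \<noteq> b then 1 else 0)"
definition id1 :: "bool \<Rightarrow> bool \<Rightarrow> complex" where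
  "id1 a b = (if a = b then 1 else 0)"

definition op_on :: "'n::finite \<Rightarrow> (bool \<Rightarrow> bool \<Rightarrow> complex) \<Rightarrow> 'n qop" where
  "op_on j M = (\<chi> s t. \<Prod>k\<in>UNIV. (if k = j then M else id1) (s k) (t k))"
definition tensor_pow :: "(bool \<Rightarrow> bool \<Rightarrow> complex) \<Rightarrow> 'n::finite qop" where
  "tensor_pow M = (\<chi> s t. \<Prod>k\<in>UNIV. M (s k) (t k))"

definition Zop :: "'n::finite \<Rightarrow> 'n qop" where "Zop j = op_on j pauliZ1"
definition Xop :: "'n::finite \<Rightarrow> 'n qop" where "Xop j = op_on j pauliX1"

definition dotZ :: "real ^ 'n \<Rightarrow> 'n::finite qop" where
  "dotZ v = (\<Sum>j\<in>UNIV. (v $ j) *\<^sub>R Zop j)"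

definition hamiltonian :: "real ^ 'n \<Rightarrow> 'n::finite qop" where
  "hamiltonian h = (1/2) *\<^sub>R dotZ h"

text \<open>Lindblad operators L_j = sqrt(lambda_j) v_j\<cdot>Z and the Lindblad span (real span).\<close>
definition lindblad :: "('n \<Rightarrow> real) \<Rightarrow> ('n \<Rightarrow> real ^ 'n) \<Rightarrow> 'n \<Rightarrow> 'n::finite qop" where
  "lindblad lam vs j = sqrt (lam j) *\<^sub>R dotZ (vs j)"

definition lindblad_span :: "('n \<Rightarrow> real) \<Rightarrow> ('n \<Rightarrow> real ^ 'n) \<Rightarrow> 'n::finite qop set" where
  "lindblad_span lam vs = span ({mat 1} \<union> range (lindblad lam vs)
      \<union> {lindblad lam vs i ** lindblad lam vs j | i j. True})"

definition opnorm :: "'n::finite qop \<Rightarrow> real" where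
  "opnorm A = onorm (\<lambda>x. A *v x)"

definition l1norm :: "real ^ 'n::finite \<Rightarrow> real" where
  "l1norm v = (\<Sum>j\<in>UNIV. \<bar>v $ j\<bar>)"

definition colspace :: "real ^ 'n ^ 'n \<Rightarrow> (real ^ 'n::finite) set" where
  "colspace C = range (\<lambda>x. C *v x)"

definition ket0L :: "real ^ 'n \<Rightarrow> 'n::finite qstate" where
  "ket0L \<theta> = (\<chi> s. \<Prod>j\<in>UNIV. (if s j then \<i> * complex_of_real (sin (\<theta> $ j))
                                   else complex_of_real (cos (\<theta> $ j))))"
definition ket1L :: "real ^ 'n \<Rightarrow> 'n::finite qstate" where
  "ket1L \<theta> = tensor_pow pauliX1 *v ket0L \<theta>"

definition outer :: "'n::finite qstate \<Rightarrow> 'n qstate \<Rightarrow> 'n qop" where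
  "outer \<phi> \<psi> = (\<chi> s t. \<phi> $ s * cnj (\<psi> $ t))"

definition code_proj :: "real ^ 'n \<Rightarrow> 'n::finite qop" where
  "code_proj \<theta> = outer (ket0L \<theta>) (ket0L \<theta>) + outer (ket1L \<theta>) (ket1L \<theta>)"

definition braket :: "'n::finite qstate \<Rightarrow> 'n qop \<Rightarrow> 'n qstate \<Rightarrow> complex" where
  "braket \<phi> A \<psi> = (\<Sum>s\<in>UNIV. cnj (\<phi> $ s) * (A *v \<psi>) $ s)"

definition qfi :: "'n::finite qstate \<Rightarrow> 'n qop \<Rightarrow> real \<Rightarrow> complex" where
  "qfi \<psi> K t = 4 * complex_of_real (t^2) * (braket \<psi> (K ** K) \<psi> - (braket \<psi> K \<psi>)^2)"

definition feasible :: "real ^ 'n ^ 'n \<Rightarrow> real ^ 'n::finite \<Rightarrow> bool" where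
  "feasible C b \<longleftrightarrow> infnorm b \<le> 1 \<and> (\<forall>v\<in>colspace C. b \<bullet> v = 0)"

end

theory Submission
  imports Defs "HOL-Library.FuncSet"
begin

lemma FL:
  fixes g :: "'n::finite \<Rightarrow> bool \<Rightarrow> 'c::comm_semiring_1"
  shows "(\<Sum>s\<in>(UNIV::('n\<Rightarrow>bool) set). \<Prod>j\<in>UNIV. g j (s j)) = (\<Prod>j\<in>UNIV. g j False + g j True)"
proof -
  have "(\<Prod>j\<in>UNIV. \<Sum>y\<in>(UNIV::bool set). g j y) = (\<Sum>s\<in>PiE UNIV (\<lambda>_. UNIV). \<Prod>j\<in>UNIV. g j (s j))"
    by (rule prod_sum_PiE) auto
  moreover have "PiE (UNIV::'n set) (\<lambda>_. UNIV::bool set) = UNIV" by auto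
  moreover have "\<And>j. (\<Sum>y\<in>(UNIV::bool set). g j y) = g j False + g j True" by (simp add: UNIV_bool)
  ultimately show ?thesis by simp
qed

definition pst :: "('n::finite \<Rightarrow> bool \<Rightarrow> complex) \<Rightarrow> 'n qstate" where
  "pst a = (\<chi> s. \<Prod>j\<in>UNIV. a j (s j))"
definition prodop :: "('n::finite \<Rightarrow> bool \<Rightarrow> bool \<Rightarrow> complex) \<Rightarrow> 'n qop" where
  "prodop F = (\<chi> s t. \<Prod>j\<in>UNIV. F j (s j) (t j))"

lemma prodop_mv: fixes F :: "'n::finite \<Rightarrow> bool \<Rightarrow> bool \<Rightarrow> complex" shows "prodop F *v pst a = pst (\<lambda>j x. F j x False * a j False + F j x True * a j True)"
  unfolding vec_eq_iff
proof
  fix s :: "'n \<Rightarrow> bool"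
  have "(prodop F *v pst a) $ s = (\<Sum>t\<in>UNIV. \<Prod>j\<in>UNIV. F j (s j) (t j) * a j (t j))"
    by (simp add: matrix_vector_mult_def prodop_def pst_def prod.distrib)
  also have "\<dots> = pst (\<lambda>j x. F j x False * a j False + F j x True * a j True) $ s"
    by (subst FL[of "\<lambda>j y. F j (s j) y * a j y"]) (simp add: pst_def)
  finally show "(prodop F *v pst a) $ s = pst (\<lambda>j x. F j x False * a j False + F j x True * a j True) $ s" .
qed

lemma prodop_mul: fixes F :: "'n::finite \<Rightarrow> bool \<Rightarrow> bool \<Rightarrow> complex" shows "prodop F ** prodop G = prodop (\<lambda>j x z. F j x False * G j False z + F j x True * G j True z)"
  unfolding vec_eq_iff
proof (intro allI)
  fix s t :: "'n \<Rightarrow> bool"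
  have "(prodop F ** prodop G) $ s $ t = (\<Sum>u\<in>UNIV. \<Prod>j\<in>UNIV. F j (s j) (u j) * G j (u j) (t j))"
    by (simp add: matrix_matrix_mult_def prodop_def prod.distrib)
  also have "\<dots> = prodop (\<lambda>j x z. F j x False * G j False z + F j x True * G j True z) $ s $ t"
    by (subst FL[of "\<lambda>j y. F j (s j) y * G j y (t j)"]) (simp add: prodop_def)
  finally show "(prodop F ** prodop G) $ s $ t = prodop (\<lambda>j x z. F j x False * G j False z + F j x True * G j True z) $ s $ t" .
qed

lemma braket_pst_prodop: fixes F :: "'n::finite \<Rightarrow> bool \<Rightarrow> bool \<Rightarrow> complex" shows "braket (pst a) (prodop F) (pst c) =
   (\<Prod>j\<in>UNIV. cnj (a j False) * (F j False False * c j False + F j False True * c j True)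
             + cnj (a j True) * (F j True False * c j False + F j True True * c j True))" (is "_ = ?R")
proof -
  have "braket (pst a) (prodop F) (pst c) = (\<Sum>s\<in>UNIV. \<Prod>j\<in>UNIV. cnj (a j (s j)) *
       (F j (s j) False * c j False + F j (s j) True * c j True))"
    unfolding braket_def prodop_mv by (simp add: pst_def prod.distrib)
  also have "\<dots> = ?R" by (subst FL) simp
  finally show ?thesis .
qed

definition a0 :: "real ^ 'n \<Rightarrow> 'n::finite \<Rightarrow> bool \<Rightarrow> complex" where
  "a0 th j x = (if x then \<i> * complex_of_real (sin (th $ j)) else complex_of_real (cos (th $ j)))"
definition a1 :: "real ^ 'n \<Rightarrow> 'n::finite \<Rightarrow> bool \<Rightarrow> complex" where
  "a1 th j x = a0 th j (\<not> x)"
definition ZF :: "'n set \<Rightarrow> 'n::finite \<Rightarrow> bool \<Rightarrow> bool \<Rightarrow> complex" where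
  "ZF K j = (if j \<in> K then pauliZ1 else id1)"
definition ZK :: "'n::finite set \<Rightarrow> 'n qop" where "ZK K = prodop (ZF K)"

lemma ket0L_pst: "ket0L th = pst (a0 th)"
  by (simp add: ket0L_def pst_def a0_def)
lemma ket1L_pst: "ket1L th = pst (a1 th)"
proof -
  have e: "tensor_pow pauliX1 = prodop (\<lambda>_. pauliX1)" by (simp add: tensor_pow_def prodop_def)
  show ?thesis unfolding ket1L_def ket0L_pst e prodop_mv
    by (simp add: pauliX1_def a1_def[abs_def]) (rule arg_cong[where f=pst], auto simp: fun_eq_iff)
qed
lemma Zop_ZK: "Zop j = ZK {j}"
  by (simp add: Zop_def op_on_def ZK_def prodop_def ZF_def)
lemma mat1_ZK: "mat 1 = (ZK {} :: 'n::finite qop)"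
proof -
  have "\<And>s t::'n\<Rightarrow>bool. (\<Prod>j\<in>UNIV. id1 (s j) (t j)) = (if s = t then 1 else 0)"
  proof -
    fix s t :: "'n\<Rightarrow>bool"
    show "(\<Prod>j\<in>UNIV. id1 (s j) (t j)) = (if s = t then 1 else 0)"
    proof (cases "s = t")
      case True then show ?thesis by (simp add: id1_def)
    next
      case False then obtain j where "s j \<noteq> t j" by auto
      then show ?thesis using False by (auto simp: id1_def intro!: prod_zero)
    qed
  qed
  then show ?thesis by (simp add: ZK_def prodop_def ZF_def mat_def vec_eq_iff)
qed
lemma ZK_mul: "ZK K ** ZK L = ZK ((K - L) \<union> (L - K))"
  unfolding ZK_def prodop_mul
  by (rule arg_cong[where f=prodop]) (auto simp: ZF_def pauliZ1_def id1_def fun_eq_iff)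

lemma cs1[simp]: "complex_of_real (cos x) * complex_of_real (cos x) + complex_of_real (sin x) * complex_of_real (sin x) = 1"
proof -
  have "cos x * cos x + sin x * sin x = 1" by (metis power2_eq_square sin_cos_squared_add2)
  then show ?thesis by (metis of_real_add of_real_mult of_real_1)
qed

lemma B00: "braket (ket0L th) (ZK K) (ket0L th) =
   (\<Prod>j\<in>UNIV. if j \<in> K then complex_of_real ((cos (th$j))\<^sup>2 - (sin (th$j))\<^sup>2) else 1)"
  unfolding ket0L_pst ZK_def braket_pst_prodop
  apply (rule prod.cong, simp)
  apply (simp add: ZF_def pauliZ1_def id1_def a0_def power2_eq_square algebra_simps)
  done
lemma B11: "braket (ket1L th) (ZK K) (ket1L th) =
   (\<Prod>j\<in>UNIV. if j \<in> K then complex_of_real ((sin (th$j))\<^sup>2 - (cos (th$j))\<^sup>2) else 1)"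
  unfolding ket1L_pst ZK_def braket_pst_prodop
  apply (rule prod.cong, simp)
  apply (simp add: ZF_def pauliZ1_def id1_def a0_def a1_def power2_eq_square algebra_simps)
  done
lemma B01: "braket (ket0L th) (ZK K) (ket1L th) =
   (\<Prod>j\<in>UNIV. if j \<in> K then 2 * \<i> * complex_of_real (sin (th$j) * cos (th$j)) else 0)"
  unfolding ket0L_pst ket1L_pst ZK_def braket_pst_prodop
  apply (rule prod.cong, simp)
  apply (simp add: ZF_def pauliZ1_def id1_def a0_def a1_def algebra_simps)
  done
lemma B10: "braket (ket1L th) (ZK K) (ket0L th) =
   (\<Prod>j\<in>UNIV. if j \<in> K then - 2 * \<i> * complex_of_real (sin (th$j) * cos (th$j)) else 0)"
  unfolding ket0L_pst ket1L_pst ZK_def braket_pst_prodop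
  apply (rule prod.cong, simp)
  apply (simp add: ZF_def pauliZ1_def id1_def a0_def a1_def algebra_simps)
  done


lemma cscale: "r *\<^sub>R (z::complex) = complex_of_real r * z"
  by (simp add: scaleR_conv_of_real)

lemma braket_expand: "braket p A q = (\<Sum>s\<in>UNIV. \<Sum>t\<in>UNIV. cnj (p$s) * A$s$t * q$t)"
  by (simp add: braket_def matrix_vector_mult_def sum_distrib_left mult.assoc)
lemma braket_add[simp]: "braket p (A + B) q = braket p A q + braket p B q"
  by (simp add: braket_expand algebra_simps sum.distrib)
lemma braket_diff[simp]: "braket p (A - B) q = braket p A q - braket p B q"
  by (simp add: braket_expand algebra_simps sum_subtractf)
lemma braket_zero[simp]: "braket p 0 q = 0"
  by (simp add: braket_expand)
lemma braket_scaleR[simp]: "braket p (r *\<^sub>R A) q = complex_of_real r * braket p A q"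
  by (simp add: braket_expand sum_distrib_left cscale algebra_simps)
lemma braket_sum[simp]: "braket p (\<Sum>k\<in>S. A k) q = (\<Sum>k\<in>S. braket p (A k) q)"
  by (induct S rule: infinite_finite_induct) auto

lemma mm_add_left: "(A + B) ** C = A ** C + B ** (C::'a::comm_ring_1^'n::finite^'n)"
  by (simp add: vec_eq_iff matrix_matrix_mult_def algebra_simps sum.distrib)
lemma mm_zero_left[simp]: "(0::'a::comm_ring_1^'n::finite^'n) ** C = 0"
  by (simp add: vec_eq_iff matrix_matrix_mult_def)
lemma mm_zero_right[simp]: "C ** (0::'a::comm_ring_1^'n::finite^'n) = 0"
  by (simp add: vec_eq_iff matrix_matrix_mult_def)
lemma mm_sum_left: "(\<Sum>k\<in>S. A k) ** C = (\<Sum>k\<in>S. A k ** (C::'a::comm_ring_1^'n::finite^'n))"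
  by (induct S rule: infinite_finite_induct) (auto simp: mm_add_left)
lemma mm_sum_right: "C ** (\<Sum>k\<in>S. A k) = (\<Sum>k\<in>S. C ** (A k::'a::comm_ring_1^'n::finite^'n))"
  by (induct S rule: infinite_finite_induct) (auto simp: matrix_add_ldistrib)
lemma mm_scaleR: "(r *\<^sub>R A) ** (q *\<^sub>R B) = (r * q) *\<^sub>R (A ** (B::complex^'n::finite^'n))"
  by (simp add: vec_eq_iff matrix_matrix_mult_def cscale sum_distrib_left algebra_simps)

definition op2 :: "'n::finite qstate \<Rightarrow> 'n qstate \<Rightarrow> complex \<Rightarrow> complex \<Rightarrow> 'n qop" where
  "op2 p q x y = (\<chi> s t. x * p$s * cnj (p$t) + y * q$s * cnj (q$t))"

lemma op2_left: "(op2 p q x y ** A) $ s $ u = x * p$s * (\<Sum>w\<in>UNIV. cnj (p$w) * A$w$u) + y * q$s * (\<Sum>w\<in>UNIV. cnj (q$w) * A$w$u)"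
  by (simp add: op2_def matrix_matrix_mult_def sum.distrib sum_distrib_left algebra_simps)

lemma sw: "(\<Sum>u\<in>UNIV. (\<Sum>w\<in>UNIV. cnj (p$w) * A$w$u) * q$u) = braket p A q"
  by (simp add: braket_expand sum_distrib_right mult.assoc) (rule sum.swap)

lemma sandwich:
  assumes "braket p A q = 0" "braket q A p = 0"
  shows "op2 p q x y ** A ** op2 p q x' y' = op2 p q (x * braket p A p * x') (y * braket q A q * y')"
proof -
  have "\<And>s t. (op2 p q x y ** A ** op2 p q x' y') $ s $ t =
     x * p$s * x' * cnj (p$t) * braket p A p + x * p$s * y' * cnj (q$t) * braket p A q
     + y * q$s * x' * cnj (p$t) * braket q A p + y * q$s * y' * cnj (q$t) * braket q A q"
  proof -
    fix s t
    have "(op2 p q x y ** A ** op2 p q x' y') $ s $ t = (\<Sum>u\<in>UNIV. (op2 p q x y ** A) $ s $ u * op2 p q x' y' $ u $ t)"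
      by (simp add: matrix_matrix_mult_def)
    also have "\<dots> = x * p$s * x' * cnj (p$t) * (\<Sum>u\<in>UNIV. (\<Sum>w\<in>UNIV. cnj (p$w) * A$w$u) * p$u)
         + x * p$s * y' * cnj (q$t) * (\<Sum>u\<in>UNIV. (\<Sum>w\<in>UNIV. cnj (p$w) * A$w$u) * q$u)
         + y * q$s * x' * cnj (p$t) * (\<Sum>u\<in>UNIV. (\<Sum>w\<in>UNIV. cnj (q$w) * A$w$u) * p$u)
         + y * q$s * y' * cnj (q$t) * (\<Sum>u\<in>UNIV. (\<Sum>w\<in>UNIV. cnj (q$w) * A$w$u) * q$u)"
      unfolding op2_left by (simp add: op2_def sum.distrib sum_distrib_left algebra_simps)
    finally show "?thesis s t" by (simp only: sw)
  qed
  then show ?thesis using assms by (simp add: vec_eq_iff op2_def)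
qed

lemma braket_id: "braket r (mat 1) p = (\<Sum>s\<in>UNIV. cnj (r$s) * p$s)"
  by (simp add: braket_def)

lemma braket_op2: "braket r (op2 p q x y) r' =
   x * braket r (mat 1) p * braket p (mat 1) r' + y * braket r (mat 1) q * braket q (mat 1) r'"
  unfolding braket_id by (simp add: braket_def op2_def matrix_vector_mult_def sum.distrib sum_distrib_left sum_distrib_right algebra_simps)


definition cnd :: "real ^ 'n \<Rightarrow> 'n::finite qop \<Rightarrow> bool" where
  "cnd th S \<longleftrightarrow> braket (ket0L th) S (ket1L th) = 0 \<and> braket (ket1L th) S (ket0L th) = 0
     \<and> braket (ket0L th) S (ket0L th) = braket (ket1L th) S (ket1L th)
     \<and> Im (braket (ket0L th) S (ket0L th)) = 0"

lemma subspace_cnd: "subspace {S. cnd th S}"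
  unfolding subspace_def cnd_def by auto

lemma prod_if_K: "(\<Prod>j\<in>(UNIV::'n::finite set). if j \<in> K then f j else 1) = (\<Prod>j\<in>K. f j)"
  using prod.inter_restrict[of "UNIV::'n set" f K] by simp

context
  fixes th b :: "real ^ 'n::finite"
  assumes hb: "\<And>j. (cos (th$j))\<^sup>2 - (sin (th$j))\<^sup>2 = b$j"
begin

lemma B00b: "braket (ket0L th) (ZK K) (ket0L th) = (\<Prod>j\<in>K. complex_of_real (b$j))"
  unfolding B00 hb prod_if_K ..
lemma B11b: "braket (ket1L th) (ZK K) (ket1L th) = (\<Prod>j\<in>K. complex_of_real (- b$j))"
proof -
  have "\<And>j. (sin (th$j))\<^sup>2 - (cos (th$j))\<^sup>2 = - b$j" using hb by (metis minus_diff_eq)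
  then show ?thesis unfolding B11 prod_if_K by simp
qed
lemma B01b: "j \<notin> K \<Longrightarrow> braket (ket0L th) (ZK K) (ket1L th) = 0"
  unfolding B01 by (rule prod_zero) auto
lemma B10b: "j \<notin> K \<Longrightarrow> braket (ket1L th) (ZK K) (ket0L th) = 0"
  unfolding B10 by (rule prod_zero) auto

lemma cnd_ZK0: "cnd th (ZK {})"
  by (simp add: cnd_def B00b B11b B01b B10b)
lemma cnd_mat1: "cnd th (mat 1)"
  by (simp add: mat1_ZK cnd_ZK0)

lemma cnd_ZK2:
  assumes "k \<noteq> l" "CARD('n) \<ge> 3"
  shows "cnd th (ZK {k,l})"
proof -
  have "\<exists>j. j \<notin> {k,l}"
  proof (rule ccontr)
    assume "\<not> ?thesis" then have "UNIV = {k,l}" by auto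
    moreover have "card {k,l} \<le> 2" by (simp add: card_insert_if)
    ultimately have "CARD('n) \<le> 2" by simp
    then show False using assms by simp
  qed
  then obtain j where j: "j \<notin> {k,l}" by blast
  show ?thesis using assms(1) unfolding cnd_def
    by (simp add: B00b B11b B01b[OF j] B10b[OF j] flip: of_real_mult)
qed

lemma cnd_ZKmul:
  assumes "CARD('n) \<ge> 3"
  shows "cnd th (ZK ({k}-{l} \<union> ({l}-{k})))"
proof (cases "k = l")
  case True then show ?thesis by (simp add: cnd_ZK0)
next
  case False
  then have "{k}-{l} \<union> ({l}-{k}) = {k,l}" by auto
  then show ?thesis using cnd_ZK2[OF False assms] by simp
qed

lemma dotZ_ZK: "dotZ u = (\<Sum>k\<in>UNIV. (u$k) *\<^sub>R ZK {k})"
  by (simp add: dotZ_def Zop_ZK)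

lemma dotZ_vals:
  assumes "CARD('n) \<ge> 2"
  shows "braket (ket0L th) (dotZ u) (ket0L th) = complex_of_real (u \<bullet> b)"
    "braket (ket1L th) (dotZ u) (ket1L th) = complex_of_real (- (u \<bullet> b))"
    "braket (ket0L th) (dotZ u) (ket1L th) = 0"
    "braket (ket1L th) (dotZ u) (ket0L th) = 0"
proof -
  have ex: "\<And>k. \<exists>j. j \<noteq> (k::'n)"
  proof (rule ccontr)
    fix k :: 'n assume "\<not> (\<exists>j. j \<noteq> k)" then have "UNIV = {k}" by auto
    then have "CARD('n) = card {k}" by (rule arg_cong)
    then have "CARD('n) = 1" by simp
    then show False using assms by simp
  qed
  have "\<And>k. braket (ket0L th) (ZK {k}) (ket1L th) = 0" using ex B01b by (metis singletonD)
  moreover have "\<And>k. braket (ket1L th) (ZK {k}) (ket0L th) = 0" using ex B10b by (metis singletonD)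
  ultimately show "braket (ket0L th) (dotZ u) (ket1L th) = 0" "braket (ket1L th) (dotZ u) (ket0L th) = 0"
    by (simp_all add: dotZ_ZK)
  show "braket (ket0L th) (dotZ u) (ket0L th) = complex_of_real (u \<bullet> b)"
    by (simp add: dotZ_ZK B00b inner_vec_def)
  show "braket (ket1L th) (dotZ u) (ket1L th) = complex_of_real (- (u \<bullet> b))"
    by (simp add: dotZ_ZK B11b inner_vec_def sum_negf)
qed

lemma cnd_dotZ:
  assumes "CARD('n) \<ge> 2" "u \<bullet> b = 0"
  shows "cnd th (dotZ u)"
  using dotZ_vals[OF assms(1), of u] assms(2) by (simp add: cnd_def)

lemma cnd_dotZ2:
  assumes "CARD('n) \<ge> 3"
  shows "cnd th (dotZ u ** dotZ w)"
proof -
  have "dotZ u ** dotZ w = (\<Sum>k\<in>UNIV. \<Sum>l\<in>UNIV. (u$k * w$l) *\<^sub>R ZK ({k}-{l} \<union> ({l}-{k})))"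
    by (simp add: dotZ_ZK mm_sum_left mm_sum_right mm_scaleR ZK_mul) (rule sum.swap)
  moreover have "cnd th (\<Sum>k\<in>UNIV. \<Sum>l\<in>UNIV. (u$k * w$l) *\<^sub>R ZK ({k}-{l} \<union> ({l}-{k})))"
    apply (rule subspace_sum[OF subspace_cnd, simplified])
    apply (rule subspace_sum[OF subspace_cnd, simplified])
    apply (rule subspace_scale[OF subspace_cnd, simplified])
    apply (rule cnd_ZKmul[OF assms])
    done
  ultimately show ?thesis by simp
qed

end

lemma bl_mv: "bounded_linear (\<lambda>x. (A::'n::finite qop) *v x)"
  using linear_conv_bounded_linear matrix_vector_mul_linear by blast

lemma braket_le: "norm (braket p A q) \<le> norm p * opnorm A * norm q"
proof -
  let ?y = "A *v q"
  have "norm (braket p A q) \<le> (\<Sum>s\<in>UNIV. norm (cnj (p$s) * ?y$s))"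
    unfolding braket_def by (rule norm_sum)
  also have "\<dots> = (\<Sum>s\<in>UNIV. \<bar>norm (p$s)\<bar> * \<bar>norm (?y$s)\<bar>)" by (simp add: norm_mult)
  also have "\<dots> \<le> norm p * norm ?y" unfolding norm_vec_def by (rule L2_set_mult_ineq)
  also have "\<dots> \<le> norm p * (opnorm A * norm q)"
    unfolding opnorm_def by (rule mult_left_mono[OF onorm[OF bl_mv]]) simp
  finally show ?thesis by (simp add: mult.assoc)
qed

lemma Zop_entry: "Zop k $ s $ t = (if s = t then (if s k then -1 else 1) else (0::complex))"
proof (cases "s = t")
  case True
  have "(\<Prod>j\<in>UNIV. (if j = k then pauliZ1 else id1) (s j) (s j)) = (\<Prod>j\<in>UNIV. if j = k then (if s k then -1 else 1) else (1::complex))"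
    by (rule prod.cong) (auto simp: pauliZ1_def id1_def)
  then show ?thesis using True by (simp add: Zop_def op_on_def)
next
  case False then obtain j where "s j \<noteq> t j" by auto
  then have "(\<Prod>j\<in>UNIV. (if j = k then pauliZ1 else id1) (s j) (t j)) = 0"
    by (intro prod_zero) (auto simp: pauliZ1_def id1_def intro!: bexI[of _ j])
  then show ?thesis using False by (simp add: Zop_def op_on_def)
qed

lemma dotZ_mv: "(dotZ w *v x) $ s = (\<Sum>k\<in>UNIV. complex_of_real (w$k) * (if s k then -1 else 1)) * x$s"
proof -
  have "(dotZ w *v x) $ s = (\<Sum>t\<in>UNIV. \<Sum>k\<in>UNIV. complex_of_real (w$k) * Zop k $ s $ t * x$t)"
    by (simp add: dotZ_def matrix_vector_mult_def sum_component cscale sum_distrib_right)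
  also have "\<dots> = (\<Sum>k\<in>UNIV. \<Sum>t\<in>UNIV. complex_of_real (w$k) * Zop k $ s $ t * x$t)" by (rule sum.swap)
  also have "\<dots> = (\<Sum>k\<in>UNIV. complex_of_real (w$k) * (if s k then -1 else 1) * x$s)"
  proof (rule sum.cong[OF refl])
    fix k
    have "\<And>t. complex_of_real (w$k) * Zop k $ s $ t * x$t = (if s = t then complex_of_real (w$k) * (if s k then -1 else 1) * x$s else 0)"
      by (simp add: Zop_entry)
    then show "(\<Sum>t\<in>UNIV. complex_of_real (w$k) * Zop k $ s $ t * x$t) = complex_of_real (w$k) * (if s k then -1 else 1) * x$s"
      by simp
  qed
  finally show ?thesis by (simp add: sum_distrib_right)
qed

lemma abs1: "cmod (if c then -1 else 1) = 1" by simp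
lemma nsq: "(complex_of_real (cmod z))\<^sup>2 = cnj z * z"
  by (metis complex_norm_square of_real_power mult.commute)

lemma opnorm_dotZ: "opnorm (dotZ w) \<le> l1norm w"
  unfolding opnorm_def
proof (rule onorm_le)
  fix x :: "'a qstate"
  have "\<And>s. norm ((dotZ w *v x) $ s) \<le> l1norm w * norm (x$s)"
  proof -
    fix s
    have "norm (\<Sum>k\<in>UNIV. complex_of_real (w$k) * (if s k then -1 else 1)) \<le> (\<Sum>k\<in>UNIV. norm (complex_of_real (w$k) * (if s k then -1 else 1)))"
      by (rule norm_sum)
    also have "\<dots> = l1norm w" by (simp add: l1norm_def norm_mult abs1)
    finally show "norm ((dotZ w *v x) $ s) \<le> l1norm w * norm (x$s)"
      by (simp add: dotZ_mv norm_mult mult_right_mono)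
  qed
  then have "norm (dotZ w *v x) \<le> L2_set (\<lambda>s. l1norm w * norm (x$s)) UNIV"
    unfolding norm_vec_def by (intro L2_set_mono) auto
  also have "\<dots> = l1norm w * norm x"
    unfolding norm_vec_def by (rule L2_set_right_distrib[symmetric]) (simp add: l1norm_def sum_nonneg)
  finally show "norm (dotZ w *v x) \<le> l1norm w * norm x" .
qed

lemma norm_sq_braket: "complex_of_real ((norm p)\<^sup>2) = braket p (mat 1) (p::'n::finite qstate)"
proof -
  have "(norm p)\<^sup>2 = (\<Sum>s\<in>UNIV. (norm (p$s))\<^sup>2)"
    unfolding norm_vec_def L2_set_def by (simp add: sum_nonneg)
  then show ?thesis by (simp add: braket_id nsq)
qed

lemma norm_ket0: "norm (ket0L th) = 1"
proof -
  have "complex_of_real ((norm (ket0L th))\<^sup>2) = 1"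
    unfolding norm_sq_braket mat1_ZK B00 by simp
  then have "(norm (ket0L th))\<^sup>2 = 1" by (metis of_real_eq_1_iff)
  then show ?thesis using norm_ge_zero[of "ket0L th"] norm_ge_zero[of "ket1L th"] by (auto simp: power2_eq_1_iff)
qed
lemma norm_ket1: "norm (ket1L th) = 1"
proof -
  have "complex_of_real ((norm (ket1L th))\<^sup>2) = 1"
    unfolding norm_sq_braket mat1_ZK B11 by simp
  then have "(norm (ket1L th))\<^sup>2 = 1" by (metis of_real_eq_1_iff)
  then show ?thesis using norm_ge_zero[of "ket0L th"] norm_ge_zero[of "ket1L th"] by (auto simp: power2_eq_1_iff)
qed


lemma infnorm_le_iff: "infnorm (x::real^'n::finite) \<le> c \<longleftrightarrow> (\<forall>j. \<bar>x$j\<bar> \<le> c)"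
proof
  assume "infnorm x \<le> c" then show "\<forall>j. \<bar>x$j\<bar> \<le> c" using component_le_infnorm_cart order_trans by blast
next
  assume a: "\<forall>j. \<bar>x$j\<bar> \<le> c"
  have "infnorm x = Sup {\<bar>x$i\<bar> |i. i\<in>UNIV}" by (rule infnorm_cart)
  also have "\<dots> \<le> c"
    by (rule cSup_least) (use a in auto)
  finally show "infnorm x \<le> c" .
qed

lemma l1norm_nonneg: "0 \<le> l1norm x" by (simp add: l1norm_def sum_nonneg)
lemma l1norm_add: "l1norm (x + y) \<le> l1norm x + l1norm y"
  unfolding l1norm_def by (simp add: sum.distrib[symmetric] sum_mono abs_triangle_ineq)
lemma l1norm_scale: "l1norm (a *\<^sub>R x) = \<bar>a\<bar> * l1norm x"
  by (simp add: l1norm_def abs_mult sum_distrib_left)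
lemma l1norm_zero_iff: "l1norm x = 0 \<longleftrightarrow> x = 0"
  unfolding l1norm_def by (subst sum_nonneg_eq_0_iff) (auto simp: vec_eq_iff)
lemma inner_le_l1: "\<forall>j. \<bar>b$j\<bar> \<le> 1 \<Longrightarrow> b \<bullet> x \<le> l1norm x"
proof -
  assume a: "\<forall>j. \<bar>b$j\<bar> \<le> 1"
  have "b \<bullet> x = (\<Sum>j\<in>UNIV. b$j * x$j)" by (simp add: inner_vec_def)
  also have "\<dots> \<le> (\<Sum>j\<in>UNIV. \<bar>x$j\<bar>)"
  proof (rule sum_mono)
    fix j
    have "b$j * x$j \<le> \<bar>b$j\<bar> * \<bar>x$j\<bar>" by (metis abs_ge_self abs_mult)
    also have "\<dots> \<le> \<bar>x$j\<bar>" using a by (simp add: mult_left_le_one_le)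
    finally show "b$j * x$j \<le> \<bar>x$j\<bar>" .
  qed
  finally show ?thesis by (simp add: l1norm_def)
qed
lemma l1norm_axis: "l1norm (axis k c) = \<bar>c\<bar>"
proof -
  have "\<And>j. \<bar>axis k c $ j\<bar> = (if j = k then \<bar>c\<bar> else 0)" by (simp add: axis_def)
  then show ?thesis by (simp add: l1norm_def)
qed

lemma cont_l1: "continuous_on UNIV (\<lambda>v::real^'n::finite. l1norm (h - v))"
  unfolding l1norm_def by (intro continuous_on_sum continuous_on_component continuous_intros)

lemma subspace_col: "subspace (colspace (C::real^'n::finite^'n))"
  unfolding colspace_def by (rule linear_subspace_image[OF matrix_vector_mul_linear subspace_UNIV])

lemma feasible_le:
  assumes "feasible C b" "v \<in> colspace C"
  shows "b \<bullet> h \<le> l1norm (h - v)"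
proof -
  have "b \<bullet> v = 0" using assms unfolding feasible_def by auto
  then have "b \<bullet> h = b \<bullet> (h - v)" by (simp add: inner_diff_right)
  also have "\<dots> \<le> l1norm (h - v)" using assms(1) unfolding feasible_def infnorm_le_iff by (intro inner_le_l1) auto
  finally show ?thesis .
qed

lemma primal_min:
  fixes C :: "real^'n::finite^'n"
  shows "\<exists>v0\<in>colspace C. \<forall>v\<in>colspace C. l1norm (h - v0) \<le> l1norm (h - v)"
proof -
  let ?V = "colspace C"
  let ?T = "?V \<inter> {v. l1norm (h - v) \<le> l1norm h}"
  have cV: "closed ?V" by (rule closed_subspace[OF subspace_col])
  have cT: "closed ?T"
    by (intro closed_Int cV closed_Collect_le cont_l1 continuous_on_const)
  have "bounded ?T"
    unfolding bounded_iff
  proof (intro exI ballI)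
    fix v assume "v \<in> ?T"
    then have "l1norm (h - v) \<le> l1norm h" by auto
    moreover have "norm v \<le> norm h + norm (h - v)" using norm_triangle_sub[of v h] by (simp add: norm_minus_commute)
    moreover have "norm (h - v) \<le> l1norm (h - v)" unfolding l1norm_def by (rule norm_le_l1_cart)
    ultimately show "norm v \<le> norm h + l1norm h" by linarith
  qed
  then have "compact ?T" using cT by (simp add: compact_eq_bounded_closed)
  moreover have "0 \<in> ?T" using subspace_0[OF subspace_col] by auto
  ultimately obtain v0 where v0: "v0 \<in> ?T" "\<forall>y\<in>?T. l1norm (h - v0) \<le> l1norm (h - y)"
    using continuous_attains_inf[of ?T "\<lambda>v. l1norm (h - v)"] continuous_on_subset[OF cont_l1] by blast
  have "\<forall>v\<in>?V. l1norm (h - v0) \<le> l1norm (h - v)"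
  proof
    fix v assume v: "v \<in> ?V"
    show "l1norm (h - v0) \<le> l1norm (h - v)"
    proof (cases "v \<in> ?T")
      case True then show ?thesis using v0 by auto
    next
      case False
      then have "l1norm h < l1norm (h - v)" using v by auto
      moreover have "l1norm (h - v0) \<le> l1norm (h - 0)" using v0 \<open>0 \<in> ?T\<close> by blast
      ultimately show ?thesis by simp
    qed
  qed
  then show ?thesis using v0 by auto
qed


lemma mid: "0 \<le> (q::real) \<Longrightarrow> q < m \<Longrightarrow> 0 < (q+m)/2 \<and> (q+m)/2 < m \<and> q < (q+m)/2" by auto

lemma dual_exists:
  fixes C :: "real^'n::finite^'n"
  assumes v0: "v0 \<in> colspace C" and min: "\<forall>v\<in>colspace C. l1norm (h - v0) \<le> l1norm (h - v)"
    and mpos: "l1norm (h - v0) > 0"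
  shows "\<exists>b. feasible C b \<and> b \<bullet> h = l1norm (h - v0)"
proof -
  define m where "m = l1norm (h - v0)"
  let ?V = "colspace C"
  have sV: "subspace ?V" by (rule subspace_col)
  let ?S = "{x::real^'n. l1norm x < m}"
  let ?T = "(\<lambda>v. h - v) ` ?V"
  have cS: "convex ?S"
    unfolding convex_def
  proof (intro allI ballI impI, clarsimp)
    fix x y :: "real^'n" and u w :: real
    assume x: "l1norm x < m" and y: "l1norm y < m" and u: "0 \<le> u" and w: "0 \<le> w" and uw: "u + w = 1"
    have "l1norm (u *\<^sub>R x + w *\<^sub>R y) \<le> u * l1norm x + w * l1norm y"
      using l1norm_add[of "u *\<^sub>R x" "w *\<^sub>R y"] by (simp add: l1norm_scale u w)
    also have "\<dots> < m"
    proof (cases "u = 0")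
      case True then show ?thesis using uw y by simp
    next
      case False then have "u > 0" using u by simp
      then have "u * l1norm x < u * m" using x by simp
      moreover have "w * l1norm y \<le> w * m" using w y by (simp add: mult_left_mono)
      moreover have "u * m + w * m = m" using uw by (metis distrib_right mult_1)
      ultimately show ?thesis by linarith
    qed
    finally show "l1norm (u *\<^sub>R x + w *\<^sub>R y) < m" .
  qed
  have cT: "convex ?T"
    unfolding convex_def
  proof (intro allI ballI impI, clarsimp)
    fix a c :: "real^'n" and u w :: real
    assume a: "a \<in> ?V" and c: "c \<in> ?V" and uw: "u + w = 1"
    have "u *\<^sub>R (h - a) + w *\<^sub>R (h - c) = h - (u *\<^sub>R a + w *\<^sub>R c)"
    proof -
      have "u *\<^sub>R h + w *\<^sub>R h = h" using uw by (metis scaleR_add_left scaleR_one)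
      moreover have "u *\<^sub>R (h - a) + w *\<^sub>R (h - c) = (u *\<^sub>R h + w *\<^sub>R h) - (u *\<^sub>R a + w *\<^sub>R c)"
        by (simp add: algebra_simps)
      ultimately show ?thesis by simp
    qed
    moreover have "u *\<^sub>R a + w *\<^sub>R c \<in> ?V"
      using a c sV by (simp add: subspace_add subspace_scale)
    ultimately show "u *\<^sub>R (h - a) + w *\<^sub>R (h - c) \<in> ?T" by auto
  qed
  have S0: "0 \<in> ?S" using mpos by (simp add: m_def l1norm_def)
  have hT: "h \<in> ?T"
  proof
    show "h = h - 0" by simp
    show "0 \<in> ?V" by (rule subspace_0[OF sV])
  qed
  have dj: "?S \<inter> ?T = {}"
  proof (rule ccontr)
    assume "?S \<inter> ?T \<noteq> {}"
    then obtain v where v: "v \<in> ?V" "l1norm (h - v) < m" by blast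
    then show False using min unfolding m_def by force
  qed
  have nS: "?S \<noteq> {}" using S0 by blast
  have nT: "?T \<noteq> {}" using hT by blast
  from separating_hyperplane_sets[OF cS cT nS nT dj]
  obtain a \<beta> where a: "a \<noteq> 0" and aS: "\<forall>x\<in>?S. a \<bullet> x \<le> \<beta>" and aT: "\<forall>x\<in>?T. a \<bullet> x \<ge> \<beta>"
    by (elim exE conjE) (rule that)
  have aV: "\<forall>v\<in>?V. a \<bullet> v = 0"
  proof (rule ballI, rule ccontr)
    fix v assume v: "v \<in> ?V" and nz: "a \<bullet> v \<noteq> 0"
    define r where "r = (a \<bullet> h - \<beta> + 1) / (a \<bullet> v)"
    have "r *\<^sub>R v \<in> ?V" by (rule subspace_scale[OF sV v])
    then have "h - r *\<^sub>R v \<in> ?T" by (rule imageI)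
    then have "a \<bullet> (h - r *\<^sub>R v) \<ge> \<beta>" by (rule bspec[OF aT])
    moreover have "a \<bullet> (h - r *\<^sub>R v) = \<beta> - 1" using nz by (simp add: r_def inner_diff_right)
    ultimately show False by simp
  qed
  have ah: "a \<bullet> h \<ge> \<beta>" using bspec[OF aT hT] .
  have b0: "0 \<le> \<beta>" using bspec[OF aS S0] by simp
  define M where "M = Max (range (\<lambda>j. \<bar>a$j\<bar>))"
  have "M \<in> range (\<lambda>j. \<bar>a$j\<bar>)" unfolding M_def by (rule Max_in) auto
  then obtain k where k: "\<bar>a$k\<bar> = M" by (metis imageE)
  have kmax: "\<And>j. \<bar>a$j\<bar> \<le> \<bar>a$k\<bar>" unfolding k M_def by simp
  have "\<exists>j. a$j \<noteq> 0" using a by (simp add: vec_eq_iff)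
  then obtain j where "a$j \<noteq> 0" by blast
  then have "\<bar>a$j\<bar> > 0" by simp
  then have kpos: "\<bar>a$k\<bar> > 0" using kmax[of j] by linarith
  have tau: "\<And>\<tau>. 0 < \<tau> \<Longrightarrow> \<tau> < m \<Longrightarrow> \<tau> * \<bar>a$k\<bar> \<le> a \<bullet> h"
  proof -
    fix \<tau> :: real assume t: "0 < \<tau>" "\<tau> < m"
    let ?x = "axis k (\<tau> * sgn (a$k))"
    have "l1norm ?x = \<tau>" using t kpos by (simp add: l1norm_axis abs_mult)
    then have "?x \<in> ?S" using t by simp
    then have "a \<bullet> ?x \<le> \<beta>" by (rule bspec[OF aS])
    moreover have "a \<bullet> ?x = \<tau> * \<bar>a$k\<bar>" by (simp add: inner_axis abs_sgn mult.commute mult.left_commute)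
    ultimately show "\<tau> * \<bar>a$k\<bar> \<le> a \<bullet> h" using ah by simp
  qed
  have mk: "m * \<bar>a$k\<bar> \<le> a \<bullet> h"
  proof (rule ccontr)
    assume "\<not> ?thesis"
    then have lt: "a \<bullet> h < m * \<bar>a$k\<bar>" by simp
    define \<tau> where "\<tau> = (a \<bullet> h / \<bar>a$k\<bar> + m) / 2"
    have "a \<bullet> h / \<bar>a$k\<bar> < m" using lt kpos by (simp add: divide_less_eq)
    moreover have "0 \<le> a \<bullet> h / \<bar>a$k\<bar>" using ah b0 kpos by simp
    ultimately have "0 < \<tau> \<and> \<tau> < m \<and> a \<bullet> h / \<bar>a$k\<bar> < \<tau>" unfolding \<tau>_def using mid[of "a \<bullet> h / \<bar>a$k\<bar>" m] by blast
    then have "0 < \<tau>" "\<tau> < m" "a \<bullet> h / \<bar>a$k\<bar> < \<tau>" by auto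
    then have "a \<bullet> h < \<tau> * \<bar>a$k\<bar>" using kpos by (simp add: divide_less_eq)
    then show False using tau \<open>0 < \<tau>\<close> \<open>\<tau> < m\<close> by fastforce
  qed
  define b where "b = (1 / \<bar>a$k\<bar>) *\<^sub>R a"
  have "\<forall>j. \<bar>b$j\<bar> \<le> 1" using kmax kpos by (simp add: b_def divide_le_eq_1)
  moreover have "\<forall>v\<in>?V. b \<bullet> v = 0" using aV by (simp add: b_def)
  ultimately have fb: "feasible C b" by (simp add: feasible_def infnorm_le_iff)
  have "m \<le> b \<bullet> h" using mk kpos by (simp add: b_def le_divide_eq)
  moreover have "b \<bullet> h \<le> m" using feasible_le[OF fb v0] by (simp add: m_def)
  ultimately show ?thesis using fb m_def by force
qed


lemma dotZ_add: "dotZ (x + y) = dotZ x + dotZ y"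
  by (simp add: dotZ_def scaleR_add_left sum.distrib)
lemma dotZ_scaleR: "dotZ (c *\<^sub>R x) = c *\<^sub>R dotZ x"
  by (simp add: dotZ_def scaleR_sum_right)
lemma dotZ_diff: "dotZ (x - y) = dotZ x - dotZ y"
  by (simp add: dotZ_def scaleR_diff_left sum_subtractf)
lemma dotZ_zero: "dotZ 0 = 0"
  by (simp add: dotZ_def)
lemma dotZ_sum: "dotZ (\<Sum>j\<in>S. f j) = (\<Sum>j\<in>S. dotZ (f j))"
  by (induct S rule: infinite_finite_induct) (auto simp: dotZ_add dotZ_zero)

context
  fixes C :: "real^'n::finite^'n" and vs :: "'n \<Rightarrow> real^'n" and lam :: "'n \<Rightarrow> real"
  assumes Csym: "transpose C = C"
    and orth: "\<forall>i j. vs i \<bullet> vs j = (if i = j then 1 else 0)"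
    and eig: "\<forall>j. C *v vs j = lam j *\<^sub>R vs j"
begin

lemma col_inner: "v \<in> colspace C \<Longrightarrow> lam j = 0 \<Longrightarrow> v \<bullet> vs j = 0"
proof -
  assume "v \<in> colspace C" "lam j = 0"
  then obtain x where x: "v = C *v x" by (auto simp: colspace_def)
  have "v \<bullet> vs j = (x v* C) \<bullet> vs j" using Csym x by (metis vector_transpose_matrix)
  also have "\<dots> = x \<bullet> (C *v vs j)" by (rule dot_lmul_matrix)
  also have "\<dots> = 0" using eig \<open>lam j = 0\<close> by simp
  finally show ?thesis .
qed

lemma vs_col: "lam j \<noteq> 0 \<Longrightarrow> vs j \<in> colspace C"
proof -
  assume l: "lam j \<noteq> 0"
  have "C *v ((1 / lam j) *\<^sub>R vs j) = vs j" using eig l by (simp add: matrix_vector_mult_scaleR)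
  then show ?thesis unfolding colspace_def by (metis rangeI)
qed

lemma expand: "v = (\<Sum>j\<in>UNIV. (v \<bullet> vs j) *\<^sub>R vs j)"
proof -
  let ?B = "range vs"
  have injv: "inj vs"
  proof (rule injI)
    fix i j assume "vs i = vs j"
    then have "vs i \<bullet> vs j = 1" using orth by (metis)
    then show "i = j" using orth by (metis zero_neq_one)
  qed
  have po: "pairwise orthogonal ?B"
    unfolding pairwise_def orthogonal_def using orth by auto
  have n0: "0 \<notin> ?B"
  proof
    assume "0 \<in> ?B" then obtain j where "vs j = 0" by (metis imageE)
    then show False using orth by (metis inner_zero_left zero_neq_one)
  qed
  have ind: "independent ?B" by (rule pairwise_orthogonal_independent[OF po n0])
  have "card ?B = CARD('n)" using injv by (simp add: card_image)
  then have "dim (UNIV::(real^'n) set) \<le> card ?B" by simp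
  then have sp: "UNIV \<subseteq> span ?B" using card_ge_dim_independent[OF subset_UNIV ind] by blast
  define w where "w = v - (\<Sum>j\<in>UNIV. (v \<bullet> vs j) *\<^sub>R vs j)"
  have "\<And>i. w \<bullet> vs i = 0"
  proof -
    fix i
    have "(\<Sum>j\<in>UNIV. (v \<bullet> vs j) *\<^sub>R vs j) \<bullet> vs i = (\<Sum>j\<in>UNIV. (v \<bullet> vs j) * (vs j \<bullet> vs i))"
      by (simp add: inner_sum_left)
    also have "\<dots> = (\<Sum>j\<in>UNIV. if j = i then v \<bullet> vs i else 0)"
      by (rule sum.cong) (use orth in auto)
    also have "\<dots> = v \<bullet> vs i" by simp
    finally show "w \<bullet> vs i = 0" by (simp add: w_def inner_diff_left)
  qed
  then have "orthogonal w w"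
    using orthogonal_to_span[of w ?B w] sp unfolding orthogonal_def by auto
  then have "w = 0" by (simp add: orthogonal_def)
  then show ?thesis by (simp add: w_def)
qed

lemma dotZ_in_span:
  assumes lam_nn: "\<forall>j. 0 \<le> lam j" and v: "v \<in> colspace C"
  shows "dotZ v \<in> lindblad_span lam vs"
proof -
  have "dotZ v = (\<Sum>j\<in>UNIV. (v \<bullet> vs j) *\<^sub>R dotZ (vs j))"
    by (subst expand[of v]) (simp add: dotZ_sum dotZ_scaleR)
  also have "\<dots> \<in> lindblad_span lam vs"
    unfolding lindblad_span_def
  proof (rule span_sum)
    fix j
    show "(v \<bullet> vs j) *\<^sub>R dotZ (vs j) \<in> span ({mat 1} \<union> range (lindblad lam vs) \<union> {lindblad lam vs i ** lindblad lam vs j | i j. True})"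
    proof (cases "lam j = 0")
      case True then show ?thesis using col_inner[OF v] by (simp add: span_zero)
    next
      case False
      then have "sqrt (lam j) \<noteq> 0" using lam_nn by simp
      then have "dotZ (vs j) = (1 / sqrt (lam j)) *\<^sub>R lindblad lam vs j" by (simp add: lindblad_def)
      moreover have "lindblad lam vs j \<in> span ({mat 1} \<union> range (lindblad lam vs) \<union> {lindblad lam vs i ** lindblad lam vs j | i j. True})"
        by (rule span_base) auto
      ultimately show ?thesis by (simp add: span_scale)
    qed
  qed
  finally show ?thesis .
qed

lemma feas_vs: "feasible C b \<Longrightarrow> lam j \<noteq> 0 \<Longrightarrow> vs j \<bullet> b = 0"
  using vs_col unfolding feasible_def by (metis inner_commute)

lemma span_cnd:
  assumes fb: "feasible C b" and N3: "CARD('n) \<ge> 3"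
    and hb: "\<And>j. (cos (th$j))\<^sup>2 - (sin (th$j))\<^sup>2 = b$j"
    and S: "S \<in> lindblad_span lam vs"
  shows "cnd th S"
proof -
  have N2: "CARD('n) \<ge> 2" using N3 by simp
  have "lindblad_span lam vs \<subseteq> {S. cnd th S}"
    unfolding lindblad_span_def
  proof (rule span_minimal[OF _ subspace_cnd], safe)
    show "cnd th (mat 1)" by (rule cnd_mat1[OF hb])
  next
    fix j
    show "cnd th (lindblad lam vs j)"
    proof (cases "lam j = 0")
      case True then show ?thesis using subspace_0[OF subspace_cnd] by (simp add: lindblad_def)
    next
      case False
      then show ?thesis unfolding lindblad_def
        using subspace_scale[OF subspace_cnd] cnd_dotZ[OF hb N2 feas_vs[OF fb False]] by simp
    qed
  next
    fix i j
    have "lindblad lam vs i ** lindblad lam vs j = (sqrt (lam i) * sqrt (lam j)) *\<^sub>R (dotZ (vs i) ** dotZ (vs j))"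
      by (simp add: lindblad_def mm_scaleR)
    have sc: "\<And>x c. cnd th x \<Longrightarrow> cnd th (c *\<^sub>R x)" using subspace_scale[OF subspace_cnd] by simp
    show "cnd th (lindblad lam vs i ** lindblad lam vs j)"
      unfolding \<open>lindblad lam vs i ** lindblad lam vs j = _\<close> by (rule sc, rule cnd_dotZ2[OF hb N3])
  qed
  then show ?thesis using S by auto
qed

end

lemma braket_addL: "braket (p + p') A q = braket p A q + braket p' A q"
  by (simp add: braket_def algebra_simps sum.distrib)
lemma braket_scaleL: "braket (c *\<^sub>R p) A q = complex_of_real c * braket p A q"
  by (simp add: braket_def cscale sum_distrib_left algebra_simps)
lemma braket_addR: "braket p A (q + q') = braket p A q + braket p A q'"
  by (simp add: braket_def algebra_simps sum.distrib matrix_vector_right_distrib)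
lemma mvs: "(A::'n::finite qop) *v (c *\<^sub>R q) = c *\<^sub>R (A *v q)"
  by (simp add: vec_eq_iff matrix_vector_mult_def cscale sum_distrib_left algebra_simps)
lemma braket_scaleR_R: "braket p A (c *\<^sub>R q) = complex_of_real c * braket p A q"
  by (simp add: braket_def mvs cscale sum_distrib_left algebra_simps)

lemma code_proj_op2: "code_proj th = op2 (ket0L th) (ket1L th) 1 1"
  by (simp add: code_proj_def outer_def op2_def vec_eq_iff)
lemma op2_scale: "r *\<^sub>R op2 p q 1 1 = op2 p q (complex_of_real r) (complex_of_real r)"
  by (simp add: op2_def vec_eq_iff cscale algebra_simps)

lemma cos_sin_b:
  assumes "\<bar>b\<bar> \<le> (1::real)"
  shows "(cos (arccos b / 2))\<^sup>2 - (sin (arccos b / 2))\<^sup>2 = b"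
proof -
  have "cos (2 * (arccos b / 2)) = (cos (arccos b / 2))\<^sup>2 - (sin (arccos b / 2))\<^sup>2" by (rule cos_double)
  moreover have "cos (2 * (arccos b / 2)) = b" using assms by (simp add: cos_arccos)
  ultimately show ?thesis by simp
qed

lemma id_vals:
  "braket (ket0L th) (mat 1) (ket0L th) = 1" "braket (ket1L th) (mat 1) (ket1L th) = 1"
  "braket (ket0L th) (mat 1) (ket1L th) = 0" "braket (ket1L th) (mat 1) (ket0L th) = 0"
  unfolding mat1_ZK B00 B11 B01 B10 by simp_all

lemma op2_mul:
  "op2 (ket0L th) (ket1L th) x y ** op2 (ket0L th) (ket1L th) x' y' = op2 (ket0L th) (ket1L th) (x * x') (y * y')"
proof -
  have "op2 (ket0L th) (ket1L th) x y ** op2 (ket0L th) (ket1L th) x' y' =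
        op2 (ket0L th) (ket1L th) x y ** mat 1 ** op2 (ket0L th) (ket1L th) x' y'" by simp
  also have "\<dots> = op2 (ket0L th) (ket1L th) (x * x') (y * y')"
    by (subst sandwich) (simp_all add: id_vals)
  finally show ?thesis .
qed

lemma gen: "x * c * c + y * c * c = (x+y)*(c*(c::complex))" by (simp add: algebra_simps)

lemma psi_vals:
  fixes th :: "real^'n::finite"
  defines "\<psi> \<equiv> (1 / sqrt 2) *\<^sub>R (ket0L th + ket1L th)"
  shows "braket \<psi> (op2 (ket0L th) (ket1L th) x y) \<psi> = (x + y) / 2"
proof -
  let ?c = "complex_of_real (1 / sqrt 2)"
  have a: "braket \<psi> (mat 1) (ket0L th) = ?c" "braket \<psi> (mat 1) (ket1L th) = ?c"
    unfolding \<psi>_def braket_scaleL braket_addL by (simp_all add: id_vals)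
  have b: "braket (ket0L th) (mat 1) \<psi> = ?c" "braket (ket1L th) (mat 1) \<psi> = ?c"
    unfolding \<psi>_def braket_scaleR_R braket_addR by (simp_all add: id_vals)
  have r: "(1 / sqrt 2) * (1 / sqrt 2) = (1/2::real)"
    by (simp add: power_divide flip: power2_eq_square)
  have cc: "?c * ?c = 1/2"
    unfolding of_real_mult[symmetric] r by simp
  have "braket \<psi> (op2 (ket0L th) (ket1L th) x y) \<psi> = (x + y) * (?c * ?c)"
    unfolding braket_op2 a b by (rule gen)
  then show ?thesis unfolding cc by simp
qed


lemma qfi_calc: "4 * complex_of_real (t^2) * ((complex_of_real (a/2) * complex_of_real (a/2) + complex_of_real (-a/2) * complex_of_real (-a/2)) / 2 - ((complex_of_real (a/2) + complex_of_real (-a/2)) / 2)^2) = complex_of_real (t^2 * a^2)"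
proof -
  have "4 * complex_of_real (t^2) * ((complex_of_real (a/2) * complex_of_real (a/2) + complex_of_real (-a/2) * complex_of_real (-a/2)) / 2 - ((complex_of_real (a/2) + complex_of_real (-a/2)) / 2)^2)
     = complex_of_real (4 * t^2 * (((a/2)*(a/2) + (-a/2)*(-a/2))/2 - ((a/2 + -a/2)/2)^2))"
    by simp
  also have "4 * t^2 * (((a/2)*(a/2) + (-a/2)*(-a/2))/2 - ((a/2 + -a/2)/2)^2) = t^2 * a^2"
    by (simp add: power2_eq_square field_simps)
  finally show ?thesis .
qed

lemma Im0: "Im z = 0 \<Longrightarrow> z = complex_of_real (Re z)"
  by (simp add: complex_eq_iff)

lemma hb_of:
  assumes "feasible C b"
  shows "\<And>j. (cos ((\<chi> j. arccos (b $ j) / 2)$j))\<^sup>2 - (sin ((\<chi> j. arccos (b $ j) / 2)$j))\<^sup>2 = b$j"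
  using assms cos_sin_b unfolding feasible_def infnorm_le_iff by simp

lemma H_vals:
  assumes hb: "\<And>j. (cos (th$j))\<^sup>2 - (sin (th$j))\<^sup>2 = b$j" and N2: "CARD('n::finite) \<ge> 2"
  shows "braket (ket0L th) (hamiltonian h) (ket0L th) = complex_of_real ((h \<bullet> b) / 2)"
    "braket (ket1L th) (hamiltonian h) (ket1L th) = complex_of_real (- (h \<bullet> b) / 2)"
    "braket (ket0L th) (hamiltonian h) (ket1L th) = 0"
    "braket (ket1L th) (hamiltonian (h::real^'n)) (ket0L th) = 0"
  using dotZ_vals[OF hb N2, of h] unfolding hamiltonian_def braket_scaleR
  by simp_all


lemma half: "complex_of_real (x/2) - complex_of_real (- x/2) = complex_of_real x"
proof -
  have "x/2 - (- x/2) = x" by simp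
  then show ?thesis by (metis of_real_diff)
qed

theorem mainTheorem5:
  fixes h :: "real ^ 'n::finite" and C :: "real ^ 'n ^ 'n"
    and vs :: "'n \<Rightarrow> real ^ 'n" and lam :: "'n \<Rightarrow> real"
  assumes N3: "CARD('n) \<ge> 3"
    and Csym: "transpose C = C"
    and Cpsd: "\<forall>x. 0 \<le> x \<bullet> (C *v x)"
    and orth: "\<forall>i j. vs i \<bullet> vs j = (if i = j then 1 else 0)"
    and eig: "\<forall>j. C *v vs j = lam j *\<^sub>R vs j"
    and lam_nn: "\<forall>j. 0 \<le> lam j"
    and hcol: "h \<notin> colspace C"
  shows
   "let m = Inf {l1norm (h - v) | v. v \<in> colspace C};
        H = hamiltonian h;
        SS = lindblad_span lam vs;
        mS = Inf {opnorm (H - S) | S. S \<in> SS}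
    in (\<exists>v\<in>colspace C. l1norm (h - v) = m)
     \<and> (\<exists>S\<in>SS. opnorm (H - S) = mS)
     \<and> (\<exists>b. feasible C b \<and> b \<bullet> h = m)
     \<and> (\<forall>b. feasible C b \<longrightarrow> b \<bullet> h \<le> m)
     \<and> m = 2 * mS
     \<and> (\<forall>b. feasible C b \<and> (\<forall>b'. feasible C b' \<longrightarrow> b' \<bullet> h \<le> b \<bullet> h) \<longrightarrow>
          (let \<theta> = (\<chi> j. arccos (b $ j) / 2);
               P = code_proj \<theta>; k0 = ket0L \<theta>; k1 = ket1L \<theta>;
               \<psi> = (1 / sqrt 2) *\<^sub>R (k0 + k1)
           in (\<forall>S\<in>SS. \<exists>r::real. P ** S ** P = r *\<^sub>R P)
            \<and> braket k0 H k1 = 0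
            \<and> braket k0 H k0 - braket k1 H k1 = complex_of_real (h \<bullet> b)
            \<and> h \<bullet> b = m \<and> m > 0
            \<and> (\<forall>t::real. qfi \<psi> (P ** H ** P) t = complex_of_real (t^2 * m^2)
                      \<and> qfi \<psi> (P ** H ** P) t = complex_of_real (4 * t^2 * mS^2))))"
proof -
  let ?V = "colspace C"
  let ?m = "Inf {l1norm (h - v) | v. v \<in> ?V}"
  let ?H = "hamiltonian h"
  let ?SS = "lindblad_span lam vs"
  let ?mS = "Inf {opnorm (?H - S) | S. S \<in> ?SS}"
  have N2: "CARD('n) \<ge> 2" using N3 by simp
  obtain v0 where v0: "v0 \<in> ?V" and min: "\<forall>v\<in>?V. l1norm (h - v0) \<le> l1norm (h - v)"
    using primal_min by blast
  have m_eq: "?m = l1norm (h - v0)"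
    by (rule cInf_eq_minimum) (use v0 min in auto)
  have "h - v0 \<noteq> 0" using hcol v0 by auto
  then have mpos: "?m > 0" unfolding m_eq using l1norm_nonneg[of "h - v0"] l1norm_zero_iff[of "h - v0"]
    by linarith
  obtain b0 where fb0: "feasible C b0" and b0h: "b0 \<bullet> h = ?m"
    using dual_exists[OF v0 min] mpos m_eq by auto
  have upper: "\<forall>b. feasible C b \<longrightarrow> b \<bullet> h \<le> ?m"
    using feasible_le[OF _ v0] m_eq by auto
  have lower: "\<And>S. S \<in> ?SS \<Longrightarrow> ?m / 2 \<le> opnorm (?H - S)"
  proof -
    fix S assume S: "S \<in> ?SS"
    define th where "th = (\<chi> j. arccos (b0 $ j) / 2)"
    have hb: "\<And>j. (cos (th$j))\<^sup>2 - (sin (th$j))\<^sup>2 = b0$j" unfolding th_def by (rule hb_of[OF fb0])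
    have cS: "cnd th S" by (rule span_cnd[OF Csym orth eig fb0 N3 hb S])
    let ?A = "braket (ket0L th) (?H - S) (ket0L th)"
    let ?B = "braket (ket1L th) (?H - S) (ket1L th)"
    have "?A - ?B = (braket (ket0L th) ?H (ket0L th) - braket (ket1L th) ?H (ket1L th))
        - (braket (ket0L th) S (ket0L th) - braket (ket1L th) S (ket1L th))"
      unfolding braket_diff by simp
    also have "\<dots> = complex_of_real (h \<bullet> b0)"
      using cS unfolding cnd_def H_vals(1,2)[OF hb N2, of h] half by simp
    finally have "?A - ?B = complex_of_real (h \<bullet> b0)" .
    then have eAB: "?A - ?B = complex_of_real ?m" using b0h by (simp add: inner_commute)
    have "?m = norm (?A - ?B)" unfolding eAB using mpos by simp
    also have "\<dots> \<le> norm ?A + norm ?B" by (rule norm_triangle_ineq4)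
    also have "\<dots> \<le> opnorm (?H - S) + opnorm (?H - S)"
      using braket_le[of "ket0L th" "?H - S" "ket0L th"] braket_le[of "ket1L th" "?H - S" "ket1L th"]
      by (simp add: norm_ket0 norm_ket1)
    finally show "?m / 2 \<le> opnorm (?H - S)" by simp
  qed
  define S0 where "S0 = (1/2) *\<^sub>R dotZ v0"
  have S0: "S0 \<in> ?SS"
    unfolding S0_def using dotZ_in_span[OF Csym orth eig lam_nn v0] unfolding lindblad_span_def
    by (rule span_scale)
  have "?H - S0 = dotZ ((1/2) *\<^sub>R (h - v0))"
    by (simp add: S0_def hamiltonian_def dotZ_scaleR dotZ_diff scaleR_diff_right)
  then have "opnorm (?H - S0) \<le> ?m / 2"
    using opnorm_dotZ[of "(1/2) *\<^sub>R (h - v0)"] by (simp add: l1norm_scale m_eq)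
  then have opS0: "opnorm (?H - S0) = ?m / 2" using lower[OF S0] by linarith
  have mem: "?m / 2 \<in> {opnorm (?H - S) | S. S \<in> ?SS}"
    using S0 opS0[symmetric] by blast
  have mS_eq: "?mS = ?m / 2"
    by (rule cInf_eq_minimum[OF mem]) (use lower in auto)
  have code: "\<And>b. feasible C b \<Longrightarrow> (\<forall>b'. feasible C b' \<longrightarrow> b' \<bullet> h \<le> b \<bullet> h) \<Longrightarrow>
          (let \<theta> = (\<chi> j. arccos (b $ j) / 2);
               P = code_proj \<theta>; k0 = ket0L \<theta>; k1 = ket1L \<theta>;
               \<psi> = (1 / sqrt 2) *\<^sub>R (k0 + k1)
           in (\<forall>S\<in>?SS. \<exists>r::real. P ** S ** P = r *\<^sub>R P)
            \<and> braket k0 ?H k1 = 0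
            \<and> braket k0 ?H k0 - braket k1 ?H k1 = complex_of_real (h \<bullet> b)
            \<and> h \<bullet> b = ?m \<and> ?m > 0
            \<and> (\<forall>t::real. qfi \<psi> (P ** ?H ** P) t = complex_of_real (t^2 * ?m^2)
                      \<and> qfi \<psi> (P ** ?H ** P) t = complex_of_real (4 * t^2 * ?mS^2)))"
  proof -
    fix b assume fb: "feasible C b" and opt: "\<forall>b'. feasible C b' \<longrightarrow> b' \<bullet> h \<le> b \<bullet> h"
    have "b0 \<bullet> h \<le> b \<bullet> h" using opt fb0 by blast
    moreover have "b \<bullet> h \<le> ?m" using upper fb by blast
    ultimately have "b \<bullet> h = ?m" using b0h by linarith
    then have bh: "h \<bullet> b = ?m" by (simp add: inner_commute)
    define th where "th = (\<chi> j. arccos (b $ j) / 2)"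
    have hb: "\<And>j. (cos (th$j))\<^sup>2 - (sin (th$j))\<^sup>2 = b$j" unfolding th_def by (rule hb_of[OF fb])
    note Hv = H_vals[OF hb N2, of h]
    let ?P = "code_proj th"
    let ?k0 = "ket0L th" and ?k1 = "ket1L th"
    let ?\<psi> = "(1 / sqrt 2) *\<^sub>R (?k0 + ?k1)"
    have PSP: "\<forall>S\<in>?SS. \<exists>r::real. ?P ** S ** ?P = r *\<^sub>R ?P"
    proof
      fix S assume S: "S \<in> ?SS"
      have cS: "cnd th S" by (rule span_cnd[OF Csym orth eig fb N3 hb S])
      let ?r = "Re (braket ?k0 S ?k0)"
      have "Im (braket ?k0 S ?k0) = 0" using cS unfolding cnd_def by blast
      then have e: "braket ?k0 S ?k0 = complex_of_real ?r" by (rule Im0)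
      have "?P ** S ** ?P = op2 ?k0 ?k1 (braket ?k0 S ?k0) (braket ?k1 S ?k1)"
        unfolding code_proj_op2 using cS unfolding cnd_def by (subst sandwich) simp_all
      also have "\<dots> = ?r *\<^sub>R ?P" unfolding code_proj_op2 op2_scale
        using cS e unfolding cnd_def by simp
      finally show "\<exists>r::real. ?P ** S ** ?P = r *\<^sub>R ?P" by blast
    qed
    have K: "?P ** ?H ** ?P = op2 ?k0 ?k1 (complex_of_real ((h \<bullet> b) / 2)) (complex_of_real (- (h \<bullet> b) / 2))"
      unfolding code_proj_op2 by (subst sandwich) (simp_all add: Hv)
    have KK: "?P ** ?H ** ?P ** (?P ** ?H ** ?P) = op2 ?k0 ?k1 (complex_of_real ((h \<bullet> b) / 2) * complex_of_real ((h \<bullet> b) / 2))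
         (complex_of_real (- (h \<bullet> b) / 2) * complex_of_real (- (h \<bullet> b) / 2))"
      unfolding K op2_mul ..
    have qfi1: "\<And>t. qfi ?\<psi> (?P ** ?H ** ?P) t = complex_of_real (t^2 * ?m^2)"
    proof -
      fix t
      have "qfi ?\<psi> (?P ** ?H ** ?P) t = complex_of_real (t^2 * (h \<bullet> b)^2)"
        unfolding qfi_def K op2_mul psi_vals by (rule qfi_calc)
      then show "qfi ?\<psi> (?P ** ?H ** ?P) t = complex_of_real (t^2 * ?m^2)" using bh by simp
    qed
    have "(\<forall>S\<in>?SS. \<exists>r::real. ?P ** S ** ?P = r *\<^sub>R ?P)
            \<and> braket ?k0 ?H ?k1 = 0
            \<and> braket ?k0 ?H ?k0 - braket ?k1 ?H ?k1 = complex_of_real (h \<bullet> b)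
            \<and> h \<bullet> b = ?m \<and> ?m > 0
            \<and> (\<forall>t::real. qfi ?\<psi> (?P ** ?H ** ?P) t = complex_of_real (t^2 * ?m^2)
                      \<and> qfi ?\<psi> (?P ** ?H ** ?P) t = complex_of_real (4 * t^2 * ?mS^2))"
    proof (intro conjI allI)
      show "\<forall>S\<in>?SS. \<exists>r::real. ?P ** S ** ?P = r *\<^sub>R ?P" by (rule PSP)
      show "braket ?k0 ?H ?k1 = 0" by (rule Hv(3))
      show "braket ?k0 ?H ?k0 - braket ?k1 ?H ?k1 = complex_of_real (h \<bullet> b)"
        unfolding Hv(1,2) half ..
      show "h \<bullet> b = ?m" by (rule bh)
      show "?m > 0" by (rule mpos)
      fix t
      show "qfi ?\<psi> (?P ** ?H ** ?P) t = complex_of_real (t^2 * ?m^2)" by (rule qfi1)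
      show "qfi ?\<psi> (?P ** ?H ** ?P) t = complex_of_real (4 * t^2 * ?mS^2)"
        unfolding qfi1 mS_eq by (simp add: power_divide)
    qed
    then show "?thesis b" unfolding th_def Let_def .
  qed
  show ?thesis
    unfolding Let_def[of "?m"] Let_def[of "?H"] Let_def[of "?SS"] Let_def[of "?mS"]
  proof (intro conjI)
    show "\<exists>v\<in>?V. l1norm (h - v) = ?m" using v0 m_eq by auto
    show "\<exists>S\<in>?SS. opnorm (?H - S) = ?mS" proof
      show "opnorm (?H - S0) = ?mS" using opS0 mS_eq by simp
    qed (rule S0)
    show "\<exists>b. feasible C b \<and> b \<bullet> h = ?m" using fb0 b0h by auto
    show "\<forall>b. feasible C b \<longrightarrow> b \<bullet> h \<le> ?m" by (rule upper)
    show "?m = 2 * ?mS" using mS_eq by simp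
  qed (intro allI impI, elim conjE, rule code)
qed

end
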